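(* Let $X$ be a real Banach space and $p:X\to\mathbb{R}$ be convex. Suppose there exist $x\in X$ and $\xi\ge0$ such that $|p(u)-p(x)|\le\xi\|u-x\|$ for all $u\in X$. Then $p$ is Lipschitz continuous on $X$ with constant $\xi$, and for any $u\in X$ and any $x^*\in\partial p(u)$ it holds $\|x^*\|\le\xi$.
   Context: For convex $p$, $\partial p(u):=\{x^*\in X^*\mid \langle x^*,v-u\rangle\le p(v)-p(u)\ \forall v\in X\}$. *)

theory Defs
  imports "HOL-Analysis.Analysis"
begin

(*The dual space X* is modelled by bounded linear functionals 'a =>L real,
whose norm is the operator norm. *)
definition subdiff :: "('a::real_normed_vector \<Rightarrow> real) \<Rightarrow> 'a \<Rightarrow> ('a \<Rightarrow>\<^sub>L real) set" where
  "subdiff p u = {xs. \<forall>v. blinfun_apply xs (v - u) \<le> p v - p u}"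

end

theory Submission
  imports Defs
begin

lemma le_eps_aux:
  fixes c K :: real
  assumes "K \<ge> 0" and h: "\<And>s. 0 < s \<Longrightarrow> s \<le> 1 \<Longrightarrow> c \<le> s * K"
  shows "c \<le> 0"
proof (rule ccontr)
  assume "\<not> c \<le> 0"
  hence c: "c > 0" by simp
  show False
  proof (cases "K = 0")
    case True
    then show False using h[of 1] c by simp
  next
    case False
    hence K: "K > 0" using assms by simp
    define s where "s = min 1 (c / (2*K))"
    have s0: "0 < s" using c K by (simp add: s_def)
    have s1: "s \<le> 1" by (simp add: s_def)
    have "s * K \<le> (c/(2*K)) * K" using K by (intro mult_right_mono) (auto simp: s_def)
    also have "\<dots> = c/2" using K by simp
    finally show False using h[OF s0 s1] c by simp
  qed
qed

lemma one_side:
  fixes p :: "'a::real_normed_vector \<Rightarrow> real"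
  assumes cv: "convex_on UNIV p" and xi: "\<xi> \<ge> 0"
    and b: "\<forall>u. \<bar>p u - p x\<bar> \<le> \<xi> * norm (u - x)"
  shows "p v - p u \<le> \<xi> * norm (v - u)"
proof -
  have "p v - p u - \<xi> * norm (v - u) \<le> 0"
  proof (rule le_eps_aux[of "2 * \<xi> * norm (u - x)"])
    show "0 \<le> 2 * \<xi> * norm (u - x)" using xi by simp
    fix s :: real assume s0: "0 < s" and s1: "s \<le> 1"
    define w where "w = u + (1/s) *\<^sub>R (v - u)"
    have vw: "v = (1 - s) *\<^sub>R u + s *\<^sub>R w" using s0
      by (simp add: w_def algebra_simps)
    have c1: "p v \<le> (1 - s) * p u + s * p w"
      using convex_onD[OF cv, of s u w] s0 s1 vw by simp
    have "w - x = (u - x) + (1/s) *\<^sub>R (v - u)" by (simp add: w_def)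
    hence nw: "norm (w - x) \<le> norm (u - x) + (1/s) * norm (v - u)"
      using norm_triangle_ineq[of "u - x" "(1/s) *\<^sub>R (v - u)"] s0 by (simp only:) simp
    have pw: "p w \<le> p x + \<xi> * norm (w - x)" using b[rule_format, of w] by simp
    have pu: "p u \<ge> p x - \<xi> * norm (u - x)" using b[rule_format, of u] by simp
    have "p w - p u \<le> 2 * \<xi> * norm (u - x) + \<xi> * ((1/s) * norm (v - u))"
      using pw pu mult_left_mono[OF nw xi] by (simp add: algebra_simps)
    hence "s * (p w - p u) \<le> s * (2 * \<xi> * norm (u - x) + \<xi> * ((1/s) * norm (v - u)))"
      using s0 by (intro mult_left_mono) auto
    also have "\<dots> = s * (2 * \<xi> * norm (u - x)) + \<xi> * norm (v - u)"
      using s0 by (simp add: field_simps)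
    finally show "p v - p u - \<xi> * norm (v - u) \<le> s * (2 * \<xi> * norm (u - x))"
      using c1 by (simp add: algebra_simps)
  qed
  thus ?thesis by simp
qed

theorem mainTheorem5:
  fixes p :: "'a::banach \<Rightarrow> real" and x :: 'a and \<xi> :: real
  assumes "convex_on UNIV p"
    and "\<xi> \<ge> 0"
    and "\<forall>u. \<bar>p u - p x\<bar> \<le> \<xi> * norm (u - x)"
  shows "\<xi>-lipschitz_on UNIV p \<and> (\<forall>u. \<forall>xs \<in> subdiff p u. norm xs \<le> \<xi>)"
proof
  note os = one_side[OF assms]
  show "\<xi>-lipschitz_on UNIV p"
  proof (rule lipschitz_onI)
    fix a b :: 'a
    have "p a - p b \<le> \<xi> * norm (a - b)" by (rule os)
    moreover have "p b - p a \<le> \<xi> * norm (a - b)" using os[of b a] by (simp add: norm_minus_commute)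
    ultimately show "dist (p a) (p b) \<le> \<xi> * dist a b" by (simp add: dist_norm dist_real_def)
  qed (rule assms(2))
  show "\<forall>u. \<forall>xs \<in> subdiff p u. norm xs \<le> \<xi>"
  proof (intro allI ballI)
    fix u xs assume xs: "xs \<in> subdiff p u"
    have up: "blinfun_apply xs h \<le> \<xi> * norm h" for h
    proof -
      have "blinfun_apply xs ((u + h) - u) \<le> p (u + h) - p u" using xs unfolding subdiff_def by blast
      also have "\<dots> \<le> \<xi> * norm ((u + h) - u)" by (rule os)
      finally show ?thesis by simp
    qed
    show "norm xs \<le> \<xi>"
    proof (rule norm_blinfun_bound[OF assms(2)])
      fix h
      have "blinfun_apply xs h \<le> \<xi> * norm h" by (rule up)
      moreover have "- blinfun_apply xs h \<le> \<xi> * norm h"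
        using up[of "-h"] by (simp add: blinfun.minus_right)
      ultimately show "norm (blinfun_apply xs h) \<le> \<xi> * norm h" by simp
    qed
  qed
qed

end
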